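(* Let $p$ be a strictly monotone lattice norm on $\mathbb{R}^2$ with $p((1,0))=p((0,1))=1$, and let $\Phi$ be an Orlicz function. If $x,y\in L^\Phi(\mu)$ satisfy $0\le x\le y$ and $\|y\|_{\Phi,p}=1$, then $$\|y-x\|_{\Phi,p}\le 1-\delta_{m,p}\big(I_\Phi(x)\big),$$ where $\delta_{m,p}$ is the modulus of monotonicity of $(\mathbb{R}^2,p)$.
   Context: $(\Omega,\Sigma,\mu)$ is a $\sigma$-finite complete measure space, $L^0$ the space of (classes of a.e. equal) real measurable functions, ordered pointwise a.e. An Orlicz function is a function $\Phi:\mathbb{R}\to[0,\infty)$ which is convex, even, vanishes at $0$ and is not identically zero. $I_\Phi(x)=\int_\Omega\Phi(x(t))\,d\mu\in[0,+\infty]$; $L^\Phi(\mu)=\{x\in L^0: I_\Phi(\lambda x)<\infty\text{ for some }\lambda>0\}$. A lattice norm on $\mathbb{R}^2$ is a norm $p$ with $p((u,v))\le p((u',v'))$ whenever $|u|\le|u'|,|v|\le|v'|$; it is strictly monotone if $0\le X\le Y$ coordinatewise and $X\ne Y$ imply $p(X)<p(Y)$. $\|x\|_{\Phi,p}=\inf_{k>0}\frac1k p((1,I_\Phi(kx)))$ with the convention $p((1,+\infty))=+\infty$. The modulus of monotonicity of $(\mathbb{R}^2,p)$ is $\delta_{m,p}(\varepsilon)=\inf\{1-p(Y-X): X,Y\in\mathbb{R}^2,\ 0\le X\le Y \text{ coordinatewise},\ p(X)\ge\varepsilon,\ p(Y)=1\}$ for $\varepsilon\in(0,1]$, and $\delta_{m,p}(0)=0$.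 (One has $I_\Phi(x)\in[0,1]$ under the hypotheses.) *)

theory Defs
  imports "HOL-Analysis.Analysis"
begin

definition is_norm2 :: "(real \<times> real \<Rightarrow> real) \<Rightarrow> bool" where
  "is_norm2 p \<longleftrightarrow>
     (\<forall>X. p X = 0 \<longleftrightarrow> X = (0,0)) \<and>
     (\<forall>a u v. p (a * u, a * v) = abs a * p (u,v)) \<and>
     (\<forall>u v u' v'. p (u+u', v+v') \<le> p (u,v) + p (u',v'))"

definition lattice_norm2 :: "(real \<times> real \<Rightarrow> real) \<Rightarrow> bool" where
  "lattice_norm2 p \<longleftrightarrow> is_norm2 p \<and>
     (\<forall>u v u' v'. \<bar>u\<bar> \<le> \<bar>u'\<bar> \<and> \<bar>v\<bar> \<le> \<bar>v'\<bar> \<longrightarrow> p (u,v) \<le> p (u',v'))"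

definition strictly_monotone2 :: "(real \<times> real \<Rightarrow> real) \<Rightarrow> bool" where
  "strictly_monotone2 p \<longleftrightarrow>
     (\<forall>X Y. 0 \<le> fst X \<and> 0 \<le> snd X \<and> fst X \<le> fst Y \<and> snd X \<le> snd Y \<and> X \<noteq> Y
        \<longrightarrow> p X < p Y)"

definition delta_m :: "(real \<times> real \<Rightarrow> real) \<Rightarrow> real \<Rightarrow> real" where
  "delta_m p \<epsilon> = (if \<epsilon> = 0 then 0 else
     Inf {1 - p (fst Y - fst X, snd Y - snd X) | X Y.
            0 \<le> fst X \<and> 0 \<le> snd X \<and> fst X \<le> fst Y \<and> snd X \<le> snd Y \<and>
            p X \<ge> \<epsilon> \<and> p Y = 1})"

definition orlicz_function :: "(real \<Rightarrow> real) \<Rightarrow> bool" where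
  "orlicz_function \<Phi> \<longleftrightarrow> convex_on UNIV \<Phi> \<and> (\<forall>u. \<Phi> u \<ge> 0) \<and>
     (\<forall>u. \<Phi> (-u) = \<Phi> u) \<and> \<Phi> 0 = 0 \<and> (\<exists>u. \<Phi> u \<noteq> 0)"

definition I_Phi :: "'a measure \<Rightarrow> (real \<Rightarrow> real) \<Rightarrow> ('a \<Rightarrow> real) \<Rightarrow> ennreal" where
  "I_Phi M \<Phi> x = (\<integral>\<^sup>+ t. ennreal (\<Phi> (x t)) \<partial>M)"

definition orlicz_space :: "'a measure \<Rightarrow> (real \<Rightarrow> real) \<Rightarrow> ('a \<Rightarrow> real) set" where
  "orlicz_space M \<Phi> = {x \<in> borel_measurable M. \<exists>c>0. I_Phi M \<Phi> (\<lambda>t. c * x t) < \<infinity>}"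

definition p_ext :: "(real \<times> real \<Rightarrow> real) \<Rightarrow> ennreal \<Rightarrow> ennreal" where
  "p_ext p I = (if I = \<infinity> then \<infinity> else ennreal (p (1, enn2real I)))"

definition orlicz_p_norm ::
  "'a measure \<Rightarrow> (real \<Rightarrow> real) \<Rightarrow> (real \<times> real \<Rightarrow> real) \<Rightarrow> ('a \<Rightarrow> real) \<Rightarrow> ennreal" where
  "orlicz_p_norm M \<Phi> p x =
     (INF k\<in>{0<..}. ennreal (1/k) * p_ext p (I_Phi M \<Phi> (\<lambda>t. k * x t)))"

end

theory Submission
  imports Defs
begin

lemma pn_hom: "lattice_norm2 p \<Longrightarrow> p (a * u, a * v) = abs a * p (u,v)"
  unfolding lattice_norm2_def is_norm2_def by blast
lemma pn_tri: "lattice_norm2 p \<Longrightarrow> p (u+u', v+v') \<le> p (u,v) + p (u',v')"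
  unfolding lattice_norm2_def is_norm2_def by blast
lemma pn_mono: "lattice_norm2 p \<Longrightarrow> \<bar>u\<bar> \<le> \<bar>u'\<bar> \<Longrightarrow> \<bar>v\<bar> \<le> \<bar>v'\<bar> \<Longrightarrow> p (u,v) \<le> p (u',v')"
  unfolding lattice_norm2_def by blast
lemma pn_nonneg: assumes "lattice_norm2 p" shows "0 \<le> p (u,v)"
proof -
  have "p (0,0) = 0" using pn_hom[OF assms, of 0 u v] by simp
  moreover have "p (u + -u, v + -v) \<le> p (u,v) + p (-u,-v)" by (rule pn_tri[OF assms])
  moreover have "p (-u,-v) = p(u,v)" using pn_hom[OF assms, of "-1" u v] by simp
  ultimately show ?thesis by simp
qed
lemma pn_upper: assumes "lattice_norm2 p" "p (1,0) = 1" "p (0,1) = 1"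
  shows "p (u,v) \<le> \<bar>u\<bar> + \<bar>v\<bar>"
proof -
  have "p (u * 1 + v * 0, u * 0 + v * 1) \<le> p (u * 1,u * 0) + p (v * 0,v * 1)" by (rule pn_tri[OF assms(1)])
  also have "\<dots> = \<bar>u\<bar> + \<bar>v\<bar>" using pn_hom[OF assms(1), of u 1 0] pn_hom[OF assms(1), of v 0 1] assms by simp
  finally show ?thesis by simp
qed
lemma pn_lip: assumes "lattice_norm2 p" "p (1,0) = 1" "p (0,1) = 1"
  shows "\<bar>p (u,v) - p (u',v')\<bar> \<le> \<bar>u - u'\<bar> + \<bar>v - v'\<bar>"
proof -
  have a: "p (u,v) \<le> p (u',v') + p (u - u', v - v')" using pn_tri[OF assms(1), of u' "u-u'" v' "v-v'"] by simp
  have b: "p (u',v') \<le> p (u,v) + p (u' - u, v' - v)" using pn_tri[OF assms(1), of u "u'-u" v "v'-v"] by simp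
  have c: "p (u - u', v - v') \<le> \<bar>u - u'\<bar> + \<bar>v - v'\<bar>" by (rule pn_upper[OF assms])
  have d: "p (u' - u, v' - v) \<le> \<bar>u - u'\<bar> + \<bar>v - v'\<bar>" using pn_upper[OF assms, of "u'-u" "v'-v"] by simp
  show ?thesis using a b c d by linarith
qed

lemma pn_cont: assumes "lattice_norm2 p" "p (1,0) = 1" "p (0,1) = 1"
  shows "continuous_on UNIV p"
proof -
  have "2-lipschitz_on UNIV p"
  proof (rule lipschitz_onI)
    fix Z Z' :: "real \<times> real"
    obtain u v where Z: "Z = (u,v)" by (cases Z)
    obtain u' v' where Z': "Z' = (u',v')" by (cases Z')
    have "dist u u' \<le> dist Z Z'" "dist v v' \<le> dist Z Z'"
      using dist_fst_le[of Z Z'] dist_snd_le[of Z Z'] Z Z' by auto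
    then show "dist (p Z) (p Z') \<le> 2 * dist Z Z'"
      using pn_lip[OF assms, of u v u' v'] Z Z' by (simp add: dist_real_def)
  qed simp
  then show ?thesis by (rule lipschitz_on_continuous_on)
qed

lemma pn_cont_at: assumes "lattice_norm2 p" "p (1,0) = 1" "p (0,1) = 1"
  shows "isCont p z"
  using pn_cont[OF assms] continuous_on_eq_continuous_at[of UNIV p] by (cases z) auto

lemma compact_limit:
  assumes lp: "lattice_norm2 p" "p (1,0) = 1" "p (0,1) = 1"
  and H: "\<And>n::nat. \<exists>X Y. 0 \<le> fst X \<and> 0 \<le> snd X \<and> fst X \<le> fst Y \<and> snd X \<le> snd Y \<and> p Y = 1
      \<and> p X \<ge> e - 1/(real n + 1) \<and> p (fst Y - fst X, snd Y - snd X) \<ge> N - 1/(real n + 1)"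
  shows "\<exists>X Y. 0 \<le> fst X \<and> 0 \<le> snd X \<and> fst X \<le> fst Y \<and> snd X \<le> snd Y \<and> p Y = 1
      \<and> p X \<ge> e \<and> p (fst Y - fst X, snd Y - snd X) \<ge> N"
proof -
  define K where "K = {Z::(real\<times>real)\<times>(real\<times>real). 0 \<le> fst (fst Z) \<and> 0 \<le> snd (fst Z)
     \<and> fst (fst Z) \<le> fst (snd Z) \<and> snd (fst Z) \<le> snd (snd Z) \<and> p (snd Z) = 1}"
  define g where "g = (\<lambda>Z::(real\<times>real)\<times>(real\<times>real). p (fst (snd Z) - fst (fst Z), snd (snd Z) - snd (fst Z)))"
  have pc: "continuous_on UNIV p" by (rule pn_cont[OF lp])
  have gc: "continuous_on UNIV g" unfolding g_def
    by (rule continuous_on_compose2[OF pc]) (auto intro!: continuous_intros)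
  have pfc: "continuous_on UNIV (\<lambda>Z::(real\<times>real)\<times>(real\<times>real). p (fst Z))"
    by (rule continuous_on_compose2[OF pc]) (auto intro!: continuous_intros)
  have psc: "continuous_on UNIV (\<lambda>Z::(real\<times>real)\<times>(real\<times>real). p (snd Z))"
    by (rule continuous_on_compose2[OF pc]) (auto intro!: continuous_intros)
  have "\<forall>n. \<exists>Z. Z \<in> K \<and> p (fst Z) \<ge> e - 1/(real n + 1) \<and> g Z \<ge> N - 1/(real n + 1)"
  proof
    fix n
    obtain X Y where "0 \<le> fst X \<and> 0 \<le> snd X \<and> fst X \<le> fst Y \<and> snd X \<le> snd Y \<and> p Y = 1
      \<and> p X \<ge> e - 1/(real n + 1) \<and> p (fst Y - fst X, snd Y - snd X) \<ge> N - 1/(real n + 1)"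
      using H[of n] by blast
    then show "\<exists>Z. Z \<in> K \<and> p (fst Z) \<ge> e - 1/(real n + 1) \<and> g Z \<ge> N - 1/(real n + 1)"
      by (intro exI[of _ "(X,Y)"]) (simp add: K_def g_def)
  qed
  then obtain Z where Z: "\<And>n. Z n \<in> K \<and> p (fst (Z n)) \<ge> e - 1/(real n + 1) \<and> g (Z n) \<ge> N - 1/(real n + 1)"
    by metis
  have bK: "K \<subseteq> cbox ((0,0),(-1,-1)) ((1,1),(1,1))"
  proof
    fix W assume W: "W \<in> K"
    obtain a b c d where Wd: "W = ((a,b),(c,d))" by (metis prod.collapse)
    have "p (c,d) = 1" using W Wd K_def by simp
    moreover have "p (c,0) \<le> p (c,d)" "p (0,d) \<le> p(c,d)" using pn_mono[OF lp(1)] by auto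
    moreover have "p (c,0) = \<bar>c\<bar>" "p (0,d) = \<bar>d\<bar>" using pn_hom[OF lp(1), of c 1 0] pn_hom[OF lp(1), of d 0 1] lp by auto
    ultimately have "\<bar>c\<bar> \<le> 1" "\<bar>d\<bar> \<le> 1" by auto
    then show "W \<in> cbox ((0,0),(-1,-1)) ((1,1),(1,1))"
      using W Wd unfolding K_def by (auto simp: cbox_Pair_eq)
  qed
  have cK: "closed K" unfolding K_def
    by (intro closed_Collect_conj closed_Collect_le closed_Collect_eq psc) (auto intro!: continuous_intros)
  have "compact K" using bK cK by (meson bounded_cbox bounded_subset compact_eq_bounded_closed)
  then obtain l r where l: "l \<in> K" "strict_mono r" "(Z \<circ> r) \<longlonglongrightarrow> l"
    using seq_compactE[OF compact_imp_seq_compact, of K Z] Z by blast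
  have rn: "\<And>n. n \<le> r n" using l(2) seq_suble by blast
  have inv0: "(\<lambda>n. 1/(real n + 1)) \<longlonglongrightarrow> 0"
    using LIMSEQ_inverse_real_of_nat by (simp add: inverse_eq_divide add.commute)
  have t1: "(\<lambda>n. p (fst (Z (r n))) + 1/(real n + 1)) \<longlonglongrightarrow> p (fst l) + 0"
    apply (intro tendsto_add inv0)
    apply (rule continuous_on_tendsto_compose[OF pfc, of "\<lambda>n. Z (r n)", simplified])
    using l(3) by (simp add: comp_def)
  have t2: "(\<lambda>n. g (Z (r n)) + 1/(real n + 1)) \<longlonglongrightarrow> g l + 0"
    apply (intro tendsto_add inv0)
    apply (rule continuous_on_tendsto_compose[OF gc, of "\<lambda>n. Z (r n)", simplified])
    using l(3) by (simp add: comp_def)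
  have le1: "\<And>n. 1/(real (r n) + 1) \<le> 1/(real n + 1)"
    using rn by (simp add: frac_le)
  have "e \<le> p (fst l) + 0"
  proof (rule LIMSEQ_le_const[OF t1], intro exI allI impI)
    fix n show "e \<le> p (fst (Z (r n))) + 1/(real n + 1)" using Z[of "r n"] le1[of n] by linarith
  qed
  moreover have "N \<le> g l + 0"
  proof (rule LIMSEQ_le_const[OF t2], intro exI allI impI)
    fix n show "N \<le> g (Z (r n)) + 1/(real n + 1)" using Z[of "r n"] le1[of n] by linarith
  qed
  ultimately show ?thesis using l(1) unfolding K_def g_def
    by (intro exI[of _ "fst l"] exI[of _ "snd l"]) auto
qed


context fixes \<Phi> :: "real \<Rightarrow> real" assumes orl: "orlicz_function \<Phi>"
begin

lemma phi_nonneg: "0 \<le> \<Phi> u" using orl unfolding orlicz_function_def by blast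
lemma phi_even: "\<Phi> (-u) = \<Phi> u" using orl unfolding orlicz_function_def by blast
lemma phi0: "\<Phi> 0 = 0" using orl unfolding orlicz_function_def by blast
lemma phi_cvx: "convex_on UNIV \<Phi>" using orl unfolding orlicz_function_def by blast

lemma phi_scale: assumes "0 \<le> c" "c \<le> 1" shows "\<Phi> (c * u) \<le> c * \<Phi> u"
  using convex_onD[OF phi_cvx, of c 0 u] assms by (simp add: phi0)

lemma phi_abs: "\<Phi> \<bar>a\<bar> = \<Phi> a"
  by (cases "a \<ge> 0") (auto simp: phi_even)

lemma phi_mono: assumes "\<bar>a\<bar> \<le> \<bar>b\<bar>" shows "\<Phi> a \<le> \<Phi> b"
proof (cases "b = 0")
  case True then show ?thesis using assms by (simp add: phi0)
next
  case False
  have "\<Phi> a = \<Phi> ((\<bar>a\<bar>/\<bar>b\<bar>) * \<bar>b\<bar>)" using False by (simp add: phi_abs)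
  also have "\<dots> \<le> (\<bar>a\<bar>/\<bar>b\<bar>) * \<Phi> \<bar>b\<bar>" using assms False by (intro phi_scale) auto
  also have "\<dots> \<le> \<Phi> \<bar>b\<bar>"
  proof -
    have "\<bar>a\<bar> * \<Phi> \<bar>b\<bar> \<le> \<bar>b\<bar> * \<Phi> \<bar>b\<bar>" using assms phi_nonneg by (rule mult_right_mono)
    then show ?thesis using False by (simp add: pos_divide_le_eq mult.commute)
  qed
  finally show ?thesis by (simp add: phi_abs)
qed

lemma phi_superadd: assumes "0 \<le> a" "0 \<le> b" shows "\<Phi> a + \<Phi> b \<le> \<Phi> (a + b)"
proof (cases "a + b = 0")
  case True then have "a = 0" "b = 0" using assms by linarith+
  then show ?thesis by (simp add: phi0)
next
  case False
  then have s: "0 < a + b" using assms by linarith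
  have "\<Phi> a = \<Phi> ((a/(a+b)) * (a+b))" using s by simp
  also have "\<dots> \<le> (a/(a+b)) * \<Phi> (a+b)" using assms s by (intro phi_scale) auto
  finally have 1: "\<Phi> a \<le> (a/(a+b)) * \<Phi> (a+b)" .
  have "\<Phi> b = \<Phi> ((b/(a+b)) * (a+b))" using s by simp
  also have "\<dots> \<le> (b/(a+b)) * \<Phi> (a+b)" using assms s by (intro phi_scale) auto
  finally have 2: "\<Phi> b \<le> (b/(a+b)) * \<Phi> (a+b)" .
  have "(a/(a+b)) * \<Phi> (a+b) + (b/(a+b)) * \<Phi> (a+b) = \<Phi> (a+b)"
    using s by (simp add: add_divide_distrib[symmetric] distrib_right[symmetric])
  then show ?thesis using 1 2 by linarith
qed

lemma phi_expand: assumes "1 \<le> k" shows "k * \<Phi> u \<le> \<Phi> (k * u)"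
proof -
  have "\<Phi> ((1/k) * (k * u)) \<le> (1/k) * \<Phi> (k * u)" using assms by (intro phi_scale) auto
  then show ?thesis using assms by (simp add: field_simps)
qed

lemma phi_cont: "continuous_on UNIV \<Phi>"
  by (rule convex_on_continuous[OF open_UNIV phi_cvx])

lemma phi_borel[measurable]: "\<Phi> \<in> borel_measurable borel"
  by (rule borel_measurable_continuous_onI[OF phi_cont])

lemma I_meas: "f \<in> borel_measurable M \<Longrightarrow> (\<lambda>t. ennreal (\<Phi> (f t))) \<in> borel_measurable M"
  by measurable

lemma I_mono: assumes "\<And>t. \<bar>f t\<bar> \<le> \<bar>g t\<bar>" shows "I_Phi M \<Phi> f \<le> I_Phi M \<Phi> g"
  unfolding I_Phi_def by (intro nn_integral_mono ennreal_leI phi_mono assms)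

lemma I_expand: assumes "f \<in> borel_measurable M" "1 \<le> k"
  shows "ennreal k * I_Phi M \<Phi> f \<le> I_Phi M \<Phi> (\<lambda>t. k * f t)"
proof -
  have "ennreal k * I_Phi M \<Phi> f = (\<integral>\<^sup>+ t. ennreal k * ennreal (\<Phi> (f t)) \<partial>M)"
    unfolding I_Phi_def by (rule nn_integral_cmult[symmetric]) (rule I_meas[OF assms(1)])
  also have "\<dots> \<le> I_Phi M \<Phi> (\<lambda>t. k * f t)" unfolding I_Phi_def
    using assms(2) by (intro nn_integral_mono) (simp add: ennreal_mult''[symmetric] phi_expand phi_nonneg)
  finally show ?thesis .
qed

lemma I_split: assumes "x \<in> borel_measurable M" "y \<in> borel_measurable M"
  "AE t in M. 0 \<le> x t \<and> x t \<le> y t" "0 < k"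
  shows "I_Phi M \<Phi> (\<lambda>t. k * (y t - x t)) + I_Phi M \<Phi> (\<lambda>t. k * x t) \<le> I_Phi M \<Phi> (\<lambda>t. k * y t)"
proof -
  have "I_Phi M \<Phi> (\<lambda>t. k * (y t - x t)) + I_Phi M \<Phi> (\<lambda>t. k * x t)
     = (\<integral>\<^sup>+ t. ennreal (\<Phi> (k * (y t - x t))) + ennreal (\<Phi> (k * x t)) \<partial>M)"
  proof -
    have m1: "(\<lambda>t. k * (y t - x t)) \<in> borel_measurable M" using assms(1,2) by measurable
    have m2: "(\<lambda>t. k * x t) \<in> borel_measurable M" using assms(1,2) by measurable
    show ?thesis unfolding I_Phi_def by (rule nn_integral_add[symmetric, OF I_meas[OF m1] I_meas[OF m2]])
  qed
  also have "\<dots> \<le> I_Phi M \<Phi> (\<lambda>t. k * y t)" unfolding I_Phi_def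
  proof (rule nn_integral_mono_AE)
    show "AE t in M. ennreal (\<Phi> (k * (y t - x t))) + ennreal (\<Phi> (k * x t)) \<le> ennreal (\<Phi> (k * y t))"
      using assms(3)
    proof eventually_elim
      case (elim t)
      have "\<Phi> (k * (y t - x t)) + \<Phi> (k * x t) \<le> \<Phi> (k * (y t - x t) + k * x t)"
        using elim assms(4) by (intro phi_superadd) auto
      then show ?case
        by (simp add: ennreal_plus[symmetric] phi_nonneg right_diff_distrib del: ennreal_plus)
    qed
  qed
  finally show ?thesis .
qed

lemma I_left: assumes "x \<in> borel_measurable M" "0 < \<gamma>" "ennreal \<gamma> < I_Phi M \<Phi> x"
  shows "\<exists>c. 0 < c \<and> c < 1 \<and> ennreal \<gamma> < I_Phi M \<Phi> (\<lambda>t. c * x t)"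
proof -
  define c where "c = (\<lambda>n::nat. 1 - 1/(real n + 2))"
  have c01: "0 < c n" "c n < 1" for n unfolding c_def by (auto simp: field_simps)
  have cmono: "incseq c" unfolding c_def incseq_def by (auto simp: frac_le)
  have clim: "c \<longlonglongrightarrow> 1"
  proof -
    have "(\<lambda>n. 1/(real (n+2))) \<longlonglongrightarrow> 0"
      using LIMSEQ_ignore_initial_segment[OF lim_inverse_n', of 2] by simp
    then have "(\<lambda>n. 1 - 1/(real n + 2)) \<longlonglongrightarrow> 1 - 0"
      by (intro tendsto_diff tendsto_const) (simp add: add.commute)
    then show ?thesis unfolding c_def by simp
  qed
  define f where "f = (\<lambda>n t. ennreal (\<Phi> (c n * x t)))"
  have finc: "incseq f" unfolding f_def incseq_def le_fun_def
  proof (intro allI impI)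
    fix m n :: nat and t assume "m \<le> n"
    then have "c m \<le> c n" using cmono by (simp add: incseq_def)
    then show "ennreal (\<Phi> (c m * x t)) \<le> ennreal (\<Phi> (c n * x t))"
      using c01[of m] c01[of n] by (intro ennreal_leI phi_mono) (auto simp: abs_mult mult_right_mono)
  qed
  have fm: "\<And>n. f n \<in> borel_measurable M" unfolding f_def using assms(1) by measurable
  have sup: "(SUP n. f n t) = ennreal (\<Phi> (x t))" for t
  proof -
    have "(\<lambda>n. f n t) \<longlonglongrightarrow> (SUP n. f n t)"
      using finc by (intro LIMSEQ_SUP) (simp add: incseq_def le_fun_def)
    moreover have "(\<lambda>n. f n t) \<longlonglongrightarrow> ennreal (\<Phi> (1 * x t))"
      unfolding f_def
      by (intro tendsto_ennrealI continuous_on_tendsto_compose[OF phi_cont, of "\<lambda>n. c n * x t", simplified]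
          tendsto_mult clim tendsto_const)
    ultimately show ?thesis using LIMSEQ_unique by fastforce
  qed
  have sup': "\<And>t. (SUP n. ennreal (\<Phi> (c n * x t))) = ennreal (\<Phi> (x t))" using sup unfolding f_def .
  have "I_Phi M \<Phi> x = (SUP n. I_Phi M \<Phi> (\<lambda>t. c n * x t))"
    unfolding I_Phi_def using nn_integral_monotone_convergence_SUP[OF finc fm]
    by (simp add: sup' f_def)
  then obtain n where "ennreal \<gamma> < I_Phi M \<Phi> (\<lambda>t. c n * x t)"
    using assms(3) by (auto simp: less_SUP_iff)
  then show ?thesis using c01[of n] by blast
qed

end

lemma main_step:
  fixes M :: "'a measure" and \<Phi> :: "real \<Rightarrow> real" and p :: "real \<times> real \<Rightarrow> real"
    and x y :: "'a \<Rightarrow> real"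
  assumes lp: "lattice_norm2 p" "p (1,0) = 1" "p (0,1) = 1"
    and orl: "orlicz_function \<Phi>"
    and xm: "x \<in> borel_measurable M" and ym: "y \<in> borel_measurable M"
    and xy: "AE t in M. 0 \<le> x t \<and> x t \<le> y t"
    and ny: "orlicz_p_norm M \<Phi> p y = 1"
    and eta: "0 < \<eta>" and c: "0 < c" "c < 1" "1 + \<eta> \<le> 1 / c"
    and gam: "\<gamma> \<le> enn2real (I_Phi M \<Phi> x)" "\<gamma> \<le> 0 \<or> ennreal \<gamma> < I_Phi M \<Phi> (\<lambda>t. c * x t)"
  shows "\<exists>X Y. 0 \<le> fst X \<and> 0 \<le> snd X \<and> fst X \<le> fst Y \<and> snd X \<le> snd Y \<and> p Y = 1
      \<and> p X \<ge> \<gamma> / (1 + \<eta>) \<and> orlicz_p_norm M \<Phi> p (\<lambda>t. y t - x t) \<le> ennreal ((1 + \<eta>) * p (fst Y - fst X, snd Y - snd X))"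
proof -
  let ?I = "I_Phi M \<Phi>"
  have "orlicz_p_norm M \<Phi> p y < ennreal (1 + \<eta>)" using ny eta by simp
  then obtain k where k: "k > 0" and Tk: "ennreal (1/k) * p_ext p (?I (\<lambda>t. k * y t)) < ennreal (1 + \<eta>)"
    unfolding orlicz_p_norm_def by (auto simp: INF_less_iff)
  have fin: "?I (\<lambda>t. k * y t) \<noteq> \<infinity>"
  proof
    assume "?I (\<lambda>t. k * y t) = \<infinity>"
    then have "ennreal (1/k) * p_ext p (?I (\<lambda>t. k * y t)) = \<infinity>" using k
      by (simp add: p_ext_def ennreal_mult_top)
    then show False using Tk by simp
  qed
  define a where "a = enn2real (?I (\<lambda>t. k * y t))"
  have Ia: "?I (\<lambda>t. k * y t) = ennreal a" using fin unfolding a_def by (simp add: ennreal_enn2real_if)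
  have a0: "0 \<le> a" unfolding a_def by simp
  have "p (1,0) \<le> p (1, a)" by (rule pn_mono[OF lp(1)]) auto
  then have p1a: "1 \<le> p (1, a)" using lp by simp
  define s where "s = (1/k) * p (1, a)"
  have "ennreal (1/k) * p_ext p (?I (\<lambda>t. k * y t)) = ennreal s"
    unfolding s_def p_ext_def using Ia k a0 by (simp add: ennreal_mult[symmetric] pn_nonneg[OF lp(1)] del: ennreal_mult)
  then have es: "ennreal s < ennreal (1 + \<eta>)" using Tk by metis
  have s_ge: "1/k \<le> s" unfolding s_def using p1a k by (simp add: divide_right_mono)
  have s0: "0 < s" using s_ge k by (meson less_le_trans zero_less_divide_1_iff)
  have s_lt: "s < 1 + \<eta>" using es s0 ennreal_less_iff[of s "1 + \<eta>"] by simp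
  have kc: "c \<le> k"
  proof (rule ccontr)
    assume "\<not> c \<le> k"
    then have "1/c < 1/k" using k by (simp add: frac_less2)
    then show False using s_ge s_lt c by linarith
  qed
  have split: "?I (\<lambda>t. k * (y t - x t)) + ?I (\<lambda>t. k * x t) \<le> ?I (\<lambda>t. k * y t)"
    by (rule I_split[OF orl xm ym xy k])
  have finx: "?I (\<lambda>t. k * x t) \<noteq> \<infinity>" and find: "?I (\<lambda>t. k * (y t - x t)) \<noteq> \<infinity>"
    using split fin by (auto simp: top_unique)
  define b where "b = enn2real (?I (\<lambda>t. k * x t))"
  define d where "d = enn2real (?I (\<lambda>t. k * (y t - x t)))"
  have Ib: "?I (\<lambda>t. k * x t) = ennreal b" using finx unfolding b_def by (simp add: ennreal_enn2real_if)
  have Id: "?I (\<lambda>t. k * (y t - x t)) = ennreal d" using find unfolding d_def by (simp add: ennreal_enn2real_if)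
  have b0: "0 \<le> b" and d0: "0 \<le> d" unfolding b_def d_def by simp_all
  have dba: "d + b \<le> a" using split Ia Ib Id b0 d0 a0
    by (simp add: ennreal_plus[symmetric] del: ennreal_plus)
  have bk: "\<gamma> \<le> b / k"
  proof (cases "1 \<le> k")
    case True
    have le: "ennreal k * ?I x \<le> ennreal b" using I_expand[OF orl xm True] Ib by simp
    have "?I x \<noteq> \<infinity>"
    proof
      assume "?I x = \<infinity>"
      then have "ennreal k * ?I x = \<infinity>" using k by (simp add: ennreal_mult_top)
      then show False using le by (simp add: top_unique)
    qed
    then have "?I x = ennreal (enn2real (?I x))" by (simp add: ennreal_enn2real_if)
    then have "ennreal k * ?I x = ennreal (k * enn2real (?I x))" using k by (metis ennreal_mult enn2real_nonneg less_imp_le)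
    then have "ennreal (k * enn2real (?I x)) \<le> ennreal b" using le by simp
    then have "k * enn2real (?I x) \<le> b" using b0 by (simp add: ennreal_le_iff)
    then have "enn2real (?I x) \<le> b / k" using k by (simp add: field_simps)
    then show ?thesis using gam(1) by linarith
  next
    case False
    have bbk: "b \<le> b / k" using False k b0 by (simp add: le_divide_eq mult_left_le)
    show ?thesis
    proof (cases "\<gamma> \<le> 0")
      case True then show ?thesis using b0 k by (simp add: order_trans[OF True])
    next
      case False
      then have "ennreal \<gamma> < ?I (\<lambda>t. c * x t)" using gam(2) by simp
      also have "\<dots> \<le> ?I (\<lambda>t. k * x t)"
        using kc c by (intro I_mono[OF orl]) (simp add: abs_mult mult_right_mono)
      finally have "\<gamma> < b" using Ib b0 False ennreal_less_iff[of \<gamma> b] by simp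
      then show ?thesis using bbk by linarith
    qed
  qed
  define Y where "Y = (1/(k * s), a/(k * s))"
  define X where "X = (0::real, b/(k * s))"
  have ks: "0 < k * s" using k s0 by simp
  have pY: "p Y = 1"
  proof -
    have "p Y = p ((1/(k * s)) * 1, (1/(k * s)) * a)" unfolding Y_def by simp
    also have "\<dots> = (1/(k * s)) * p (1, a)" by (subst pn_hom[OF lp(1)]) (use ks in simp)
    also have "\<dots> = 1" unfolding s_def using k p1a by (simp add: field_simps)
    finally show ?thesis .
  qed
  have pX: "p X = b/(k * s)"
  proof -
    have "p X = p ((b/(k * s)) * 0, (b/(k * s)) * 1)" unfolding X_def by simp
    also have "\<dots> = b/(k * s)" by (subst pn_hom[OF lp(1)]) (use ks b0 lp in simp)
    finally show ?thesis .
  qed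
  have pXg: "\<gamma> / (1 + \<eta>) \<le> p X"
  proof (cases "\<gamma> \<le> 0")
    case True
    then have "\<gamma> / (1 + \<eta>) \<le> 0" using eta by (simp add: divide_nonpos_pos)
    also have "0 \<le> p X" using pX b0 ks by simp
    finally show ?thesis .
  next
    case False
    have "\<gamma> / (1 + \<eta>) \<le> \<gamma> / s" using False s0 s_lt by (intro divide_left_mono) auto
    also have "\<dots> \<le> (b / k) / s" using bk s0 by (intro divide_right_mono) auto
    also have "(b / k) / s = b / (k * s)" by simp
    finally show ?thesis using pX by simp
  qed
  have pYX: "p (fst Y - fst X, snd Y - snd X) = (1/(k * s)) * p (1, a - b)"
  proof -
    have "p (fst Y - fst X, snd Y - snd X) = p ((1/(k * s)) * 1, (1/(k * s)) * (a - b))"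
      unfolding X_def Y_def by (simp add: diff_divide_distrib)
    also have "\<dots> = (1/(k * s)) * p (1, a - b)" by (subst pn_hom[OF lp(1)]) (use ks in simp)
    finally show ?thesis .
  qed
  have "orlicz_p_norm M \<Phi> p (\<lambda>t. y t - x t) \<le> ennreal (1/k) * p_ext p (?I (\<lambda>t. k * (y t - x t)))"
    unfolding orlicz_p_norm_def using k by (intro INF_lower) simp
  also have "\<dots> = ennreal ((1/k) * p (1, d))" using Id k d0 by (simp add: p_ext_def ennreal_mult[symmetric] pn_nonneg[OF lp(1)] del: ennreal_mult)
  also have "\<dots> \<le> ennreal ((1/k) * p (1, a - b))"
    using pn_mono[OF lp(1), of 1 1 d "a - b"] dba d0 k by (intro ennreal_leI mult_left_mono) auto
  also have "(1/k) * p (1, a - b) = s * p (fst Y - fst X, snd Y - snd X)"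
    using pYX ks k s0 by (simp add: field_simps)
  also have "ennreal (s * p (fst Y - fst X, snd Y - snd X)) \<le> ennreal ((1 + \<eta>) * p (fst Y - fst X, snd Y - snd X))"
    using s_lt pn_nonneg[OF lp(1)] by (intro ennreal_leI mult_right_mono) auto
  finally have nb: "orlicz_p_norm M \<Phi> p (\<lambda>t. y t - x t) \<le> ennreal ((1 + \<eta>) * p (fst Y - fst X, snd Y - snd X))" .
  show ?thesis
    apply (rule exI[of _ X], rule exI[of _ Y])
    using nb pXg pY b0 ks dba d0 unfolding X_def Y_def by (auto simp: divide_right_mono)
qed


theorem theorem7:
  fixes M :: "'a measure" and \<Phi> :: "real \<Rightarrow> real" and p :: "real \<times> real \<Rightarrow> real"
    and x y :: "'a \<Rightarrow> real"
  assumes "sigma_finite_measure M" and "complete_measure M"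
    and "lattice_norm2 p" and "strictly_monotone2 p"
    and "p (1,0) = 1" and "p (0,1) = 1"
    and "orlicz_function \<Phi>"
    and "x \<in> orlicz_space M \<Phi>" and "y \<in> orlicz_space M \<Phi>"
    and "AE t in M. 0 \<le> x t \<and> x t \<le> y t"
    and "orlicz_p_norm M \<Phi> p y = 1"
  shows "orlicz_p_norm M \<Phi> p (\<lambda>t. y t - x t)
           \<le> ennreal (1 - delta_m p (enn2real (I_Phi M \<Phi> x)))"
proof -
  note lp = assms(3,5,6)
  note orl = assms(7)
  have xm: "x \<in> borel_measurable M" and ym: "y \<in> borel_measurable M"
    using assms(8,9) unfolding orlicz_space_def by auto
  note xy = assms(10) and ny = assms(11)
  define e where "e = enn2real (I_Phi M \<Phi> x)"
  define N0 where "N0 = orlicz_p_norm M \<Phi> p (\<lambda>t. y t - x t)"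
  have e0: "0 \<le> e" unfolding e_def by simp
  have pYle: "p (fst Y - fst X, snd Y - snd X) \<le> 1"
    if "0 \<le> fst X" "0 \<le> snd X" "fst X \<le> fst Y" "snd X \<le> snd Y" "p Y = 1" for X Y
  proof -
    have "p (fst Y - fst X, snd Y - snd X) \<le> p (fst Y, snd Y)"
      using that by (intro pn_mono[OF lp(1)]) auto
    then show ?thesis using that by simp
  qed
  obtain X0 Y0 where XY0: "0 \<le> fst X0" "0 \<le> snd X0" "fst X0 \<le> fst Y0" "snd X0 \<le> snd Y0" "p Y0 = 1"
    "N0 \<le> ennreal ((1 + 1) * p (fst Y0 - fst X0, snd Y0 - snd X0))"
    using main_step[OF lp orl xm ym xy ny, of 1 "1/2" 0] e0 unfolding N0_def e_def by auto
  have "N0 < \<infinity>" using XY0(6) by (simp add: le_less_trans)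
  define N where "N = enn2real N0"
  have N: "N0 = ennreal N" "0 \<le> N" using \<open>N0 < \<infinity>\<close> unfolding N_def by (auto simp: ennreal_enn2real_if)
  have H: "\<exists>X Y. 0 \<le> fst X \<and> 0 \<le> snd X \<and> fst X \<le> fst Y \<and> snd X \<le> snd Y \<and> p Y = 1
      \<and> p X \<ge> e - 1/(real n + 1) \<and> p (fst Y - fst X, snd Y - snd X) \<ge> N - 1/(real n + 1)" for n
  proof -
    define h where "h = 1/(real n + 1)"
    have h0: "0 < h" unfolding h_def by simp
    define \<gamma> where "\<gamma> = e - h/2"
    obtain c where c: "0 < c" "c < 1" "\<gamma> \<le> 0 \<or> ennreal \<gamma> < I_Phi M \<Phi> (\<lambda>t. c * x t)"
    proof (cases "\<gamma> \<le> 0")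
      case True then show ?thesis using that[of "1/2"] by simp
    next
      case False
      then have "0 < e" using h0 unfolding \<gamma>_def by linarith
      then have "I_Phi M \<Phi> x \<noteq> \<infinity>" unfolding e_def by auto
      then have "I_Phi M \<Phi> x = ennreal e" unfolding e_def by (simp add: ennreal_enn2real_if)
      moreover have "\<gamma> < e" using h0 unfolding \<gamma>_def by simp
      ultimately have "ennreal \<gamma> < I_Phi M \<Phi> x" using False e0 ennreal_less_iff[of \<gamma> e] by simp
      then obtain c where "0 < c" "c < 1" "ennreal \<gamma> < I_Phi M \<Phi> (\<lambda>t. c * x t)"
        using I_left[OF orl xm, of \<gamma>] False by force
      then show ?thesis using that by blast
    qed
    define \<eta> where "\<eta> = min (min (1/c - 1) 1) (h / (2 * (e + 1)))"
    have c1: "1 < 1/c" using c by (simp add: field_simps)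
    have eta0: "0 < \<eta>" unfolding \<eta>_def using c1 h0 e0 by simp
    have eta1: "1 + \<eta> \<le> 1/c" unfolding \<eta>_def by linarith
    have eta2: "\<eta> \<le> h / (2 * (e + 1))" unfolding \<eta>_def by simp
    have eta3: "\<eta> \<le> h" 
    proof -
      have "h / (2 * (e + 1)) \<le> h" using h0 e0 by (simp add: divide_le_eq)
      then show ?thesis using eta2 by linarith
    qed
    have ge: "\<gamma> \<le> enn2real (I_Phi M \<Phi> x)" using h0 unfolding \<gamma>_def e_def by simp
    obtain X Y where XY: "0 \<le> fst X" "0 \<le> snd X" "fst X \<le> fst Y" "snd X \<le> snd Y" "p Y = 1"
      "p X \<ge> \<gamma> / (1 + \<eta>)" "N0 \<le> ennreal ((1 + \<eta>) * p (fst Y - fst X, snd Y - snd X))"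
      using main_step[OF lp orl xm ym xy ny eta0 c(1,2) eta1 ge c(3)] unfolding N0_def by blast
    define q where "q = p (fst Y - fst X, snd Y - snd X)"
    have q1: "q \<le> 1" unfolding q_def using pYle XY by blast
    have q0: "0 \<le> q" unfolding q_def using pn_nonneg[OF lp(1)] by simp
    have "N \<le> (1 + \<eta>) * q" using XY(7) N eta0 q0 unfolding q_def by simp
    then have "N \<le> q + \<eta> * q" by (simp add: algebra_simps)
    moreover have "\<eta> * q \<le> \<eta>" using q1 eta0 by (simp add: mult_left_le)
    ultimately have qN: "N - h \<le> q" using eta3 by linarith
    have pX0: "0 \<le> p X" using pn_nonneg[OF lp(1), of "fst X" "snd X"] by simp
    have pXe: "e - h \<le> p X"
    proof (cases "\<gamma> \<le> 0")
      case True then show ?thesis using pX0 unfolding \<gamma>_def using h0 by linarith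
    next
      case False
      have "\<gamma> - \<gamma> * \<eta> \<le> \<gamma> / (1 + \<eta>)"
      proof -
        have "(\<gamma> - \<gamma> * \<eta>) * (1 + \<eta>) \<le> \<gamma>" using False eta0
          by (simp add: algebra_simps)
        then show ?thesis using eta0 by (simp add: le_divide_eq)
      qed
      moreover have "\<gamma> * \<eta> \<le> h / 2"
      proof -
        have "\<gamma> * \<eta> \<le> (e + 1) * (h / (2 * (e + 1)))"
          using False eta0 eta2 e0 h0 unfolding \<gamma>_def
          by (intro mult_mono) auto
        also have "\<dots> = h / 2" using e0 by (simp add: field_simps)
        finally show ?thesis .
      qed
      ultimately show ?thesis using XY(6) unfolding \<gamma>_def by linarith
    qed
    show ?thesis using XY qN pXe unfolding q_def h_def by blast
  qed
  obtain X Y where XY: "0 \<le> fst X" "0 \<le> snd X" "fst X \<le> fst Y" "snd X \<le> snd Y" "p Y = 1"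
      "p X \<ge> e" "p (fst Y - fst X, snd Y - snd X) \<ge> N"
    using compact_limit[OF lp H] by blast
  have q1: "p (fst Y - fst X, snd Y - snd X) \<le> 1" using pYle XY by blast
  have "N \<le> 1 - delta_m p e"
  proof (cases "e = 0")
    case True then show ?thesis using XY(7) q1 by (simp add: delta_m_def)
  next
    case False
    let ?S = "{1 - p (fst Y - fst X, snd Y - snd X) | X Y.
            0 \<le> fst X \<and> 0 \<le> snd X \<and> fst X \<le> fst Y \<and> snd X \<le> snd Y \<and>
            p X \<ge> e \<and> p Y = 1}"
    have mem: "1 - p (fst Y - fst X, snd Y - snd X) \<in> ?S" using XY by blast
    have bdd: "bdd_below ?S"
    proof (rule bdd_belowI[of _ 0])
      fix z assume "z \<in> ?S"
      then obtain X' Y' where "z = 1 - p (fst Y' - fst X', snd Y' - snd X')"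
        "0 \<le> fst X'" "0 \<le> snd X'" "fst X' \<le> fst Y'" "snd X' \<le> snd Y'" "p Y' = 1" by blast
      then show "0 \<le> z" using pYle by fastforce
    qed
    have "delta_m p e = Inf ?S" using False unfolding delta_m_def by simp
    also have "\<dots> \<le> 1 - p (fst Y - fst X, snd Y - snd X)" by (rule cInf_lower[OF mem bdd])
    finally show ?thesis using XY(7) by linarith
  qed
  then show ?thesis using N unfolding N0_def e_def by (simp add: ennreal_leI)
qed

end
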